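(* Consider the problem and algorithm AC2CD described in the context, let $\{x^k\}$ be a sequence produced by AC2CD, and assume $\lim_{k\to\infty}x^k=x^*$. Let $D^*_{\max}=\max_{i=1,\dots,n}D_i(x^* )$ (which is positive) and let $k_j$ be the first outer iteration such that \[ \|x^k-x^*\|_\infty<\frac{\tau}{\tau+1}D^*_{\max}\quad\text{for all } k\ge k_j. \] Then for all $k\ge k_j$, $j(k)\notin \mathcal A(x^* )$, where $\mathcal A(x^* )=\{i: x^*_i=l_i\}\cup\{i: x^*_i=u_i\}$.
   Context: Problem: minimize $f(x)$ subject to $e^T x = b$ and $l_i \le x_i \le u_i$ ($i=1,\dots,n$), where $n\ge 2$, $e$ is the all-ones vector, $b\in\mathbb{R}$, $l_i\in\mathbb{R}\cup\{-\infty\}$, $u_i\in\mathbb{R}\cup\{+\infty\}$, $l_i<u_i$, and $f:\mathbb{R}^n\to\mathbb{R}$ is continuously differentiable with $\nabla f$ Lipschitz continuous on $\mathbb{R}^n$. $\mathcal F$ is the feasible set, $e_i$ the $i$th unit vector. For $x\in\mathcal F$, $D_h(x)=\min\{x_h-l_h,u_h-x_h\}$. Algorithm AC2CD with parameters $\tau\in(0,1]$, $\gamma,\delta\in(0,1)$, $0<A_l\le A_u<\infty$ and starting point $x^0\in\mathcal F$: for $k=0,1,2,\dots$: let $D^k=\max_h D_h(x^k)$; choose $j(k)$ with $D_{j(k)}(x^k)\ge\tau D^k$; choose a permutation $(p^k_1,\dots,p^k_n)$ of $\{1,\dots,n\}$; set $z^{k,1}=x^k$; for $i=1,\dots,n$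 (inner iteration $(k,i)$): $g^{k,i}=\nabla_{j(k)}f(z^{k,i})-\nabla_{p^k_i}f(z^{k,i})$, $d^{k,i}=g^{k,i}(e_{p^k_i}-e_{j(k)})$; $\bar\alpha^{k,i}=\min\{u_{p^k_i}-z^{k,i}_{p^k_i},z^{k,i}_{j(k)}-l_{j(k)}\}/g^{k,i}$ if $g^{k,i}>0$, $=\min\{z^{k,i}_{p^k_i}-l_{p^k_i},u_{j(k)}-z^{k,i}_{j(k)}\}/|g^{k,i}|$ if $g^{k,i}<0$, $=0$ if $g^{k,i}=0$; choose $A^{k,i}\in[A_l,A_u]$, set $\Delta^{k,i}=\min\{\bar\alpha^{k,i},A^{k,i}\}$; starting from $\alpha=\Delta^{k,i}$, while $f(z^{k,i}+\alpha d^{k,i})>f(z^{k,i})+\gamma\alpha\nabla f(z^{k,i})^Td^{k,i}$ replace $\alpha$ by $\delta\alpha$; $\alpha^{k,i}$ is the final $\alpha$ and $z^{k,i+1}=z^{k,i}+\alpha^{k,i}d^{k,i}$. Then $x^{k+1}=z^{k,n+1}$. Standing assumptions: $\mathcal L_0=\{x\in\mathcal F: f(x)\le f(x^0)\}$ is nonempty and compact, and every $x\in\mathcal L_0$ has some index $i$ with $l_i<x_i<u_i$. *)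

theory Defs
  imports "HOL-Analysis.Analysis" "HOL-Library.Extended_Real"
begin

text \<open>Vectors in R^n are modelled as real^'n with n = CARD('n).
  Bounds l_i in R \<union> {-\<infinity>}, u_i in R \<union> {+\<infinity>} are extended reals.\<close>

definition feasible :: "('n::finite \<Rightarrow> ereal) \<Rightarrow> ('n \<Rightarrow> ereal) \<Rightarrow> real \<Rightarrow> real^'n \<Rightarrow> bool" where
  "feasible l u b x \<longleftrightarrow> (\<Sum>i\<in>UNIV. x$i) = b \<and> (\<forall>i. l i \<le> ereal (x$i) \<and> ereal (x$i) \<le> u i)"

definition Dh :: "('n::finite \<Rightarrow> ereal) \<Rightarrow> ('n \<Rightarrow> ereal) \<Rightarrow> real^'n \<Rightarrow> 'n \<Rightarrow> ereal" where
  "Dh l u x h = min (ereal (x$h) - l h) (u h - ereal (x$h))"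

definition Dmax :: "('n::finite \<Rightarrow> ereal) \<Rightarrow> ('n \<Rightarrow> ereal) \<Rightarrow> real^'n \<Rightarrow> ereal" where
  "Dmax l u x = Max (range (\<lambda>h. Dh l u x h))"

definition active_set :: "('n::finite \<Rightarrow> ereal) \<Rightarrow> ('n \<Rightarrow> ereal) \<Rightarrow> real^'n \<Rightarrow> 'n set" where
  "active_set l u x = {i. ereal (x$i) = l i} \<union> {i. ereal (x$i) = u i}"

definition norm_inf :: "real^'n::finite \<Rightarrow> real" where
  "norm_inf v = Max (range (\<lambda>i. \<bar>v$i\<bar>))"

text \<open>Maximum feasible stepsize along d = g (e_p - e_j).\<close>
definition alpha_bar :: "('n::finite \<Rightarrow> ereal) \<Rightarrow> ('n \<Rightarrow> ereal) \<Rightarrow> real^'n \<Rightarrow> 'n \<Rightarrow> 'n \<Rightarrow> real \<Rightarrow> ereal" where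
  "alpha_bar l u z p j g =
     (if g > 0 then min (u p - ereal (z$p)) (ereal (z$j) - l j) / ereal g
      else if g < 0 then min (ereal (z$p) - l p) (u j - ereal (z$j)) / ereal \<bar>g\<bar>
      else 0)"

definition armijo :: "(real^'n \<Rightarrow> real) \<Rightarrow> (real^'n \<Rightarrow> real^'n) \<Rightarrow> real \<Rightarrow> real^'n \<Rightarrow> real^'n \<Rightarrow> real \<Rightarrow> bool" where
  "armijo f grad \<gamma> z d a \<longleftrightarrow> f (z + a *\<^sub>R d) \<le> f z + \<gamma> * a * (grad z \<bullet> d)"

definition ac2cd_run ::
  "(real^'n::finite \<Rightarrow> real) \<Rightarrow> (real^'n \<Rightarrow> real^'n) \<Rightarrow> ('n \<Rightarrow> ereal) \<Rightarrow> ('n \<Rightarrow> ereal) \<Rightarrow>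
   real \<Rightarrow> real \<Rightarrow> real \<Rightarrow> real \<Rightarrow> real \<Rightarrow>
   (nat \<Rightarrow> real^'n) \<Rightarrow> (nat \<Rightarrow> 'n) \<Rightarrow> (nat \<Rightarrow> nat \<Rightarrow> 'n) \<Rightarrow> (nat \<Rightarrow> nat \<Rightarrow> real^'n) \<Rightarrow>
   (nat \<Rightarrow> nat \<Rightarrow> real) \<Rightarrow> (nat \<Rightarrow> nat \<Rightarrow> real) \<Rightarrow> bool" where
  "ac2cd_run f grad l u \<tau> \<gamma> \<delta> Al Au x j p z A \<alpha> \<longleftrightarrow>
    (\<forall>k.
       Dh l u (x k) (j k) \<ge> ereal \<tau> * Dmax l u (x k)
     \<and> bij_betw (p k) {1..CARD('n)} UNIV
     \<and> z k 1 = x k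
     \<and> x (Suc k) = z k (CARD('n) + 1)
     \<and> (\<forall>i\<in>{1..CARD('n)}.
          let g = grad (z k i) $ (j k) - grad (z k i) $ (p k i);
              d = g *\<^sub>R (axis (p k i) 1 - axis (j k) 1);
              \<Delta> = real_of_ereal (min (alpha_bar l u (z k i) (p k i) (j k) g) (ereal (A k i)))
          in A k i \<in> {Al..Au}
           \<and> (\<exists>m::nat. \<alpha> k i = \<Delta> * \<delta> ^ m \<and> armijo f grad \<gamma> (z k i) d (\<alpha> k i)
                 \<and> (\<forall>m'<m. \<not> armijo f grad \<gamma> (z k i) d (\<Delta> * \<delta> ^ m')))
           \<and> z k (i + 1) = z k i + \<alpha> k i *\<^sub>R d))"

end

theory Submission
  imports Defs
begin


lemma comp_step:
  fixes z :: "real^'n::finite"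
  shows "(z + a *\<^sub>R (g *\<^sub>R (axis p 1 - axis j 1))) $ h
     = z$h + (if h = p then a*g else 0) - (if h = j then a*g else 0)"
  by (simp add: axis_def)

lemma sum_step:
  fixes z :: "real^'n::finite"
  shows "(\<Sum>h\<in>UNIV. (z + a *\<^sub>R (g *\<^sub>R (axis p 1 - axis j 1))) $ h) = (\<Sum>h\<in>UNIV. z$h)"
  unfolding comp_step by (simp add: sum.distrib sum_subtractf)

lemma inner_step:
  fixes G :: "real^'n::finite"
  shows "G \<bullet> ((G$j - G$p) *\<^sub>R (axis p 1 - axis j 1)) = - ((G$j - G$p) * (G$j - G$p))"
  by (simp add: inner_diff_right inner_axis power2_eq_square algebra_simps)

lemma ereal_mul_le:
  assumes "g > 0" "ereal a \<le> M / ereal g" "0 \<le> a"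
  shows "ereal (a*g) \<le> M"
  using assms
  apply (cases M) 
    apply (auto simp: field_simps)
  done


lemma ere1: "ereal c \<le> U - ereal x \<Longrightarrow> ereal (x + c) \<le> U"
  by (cases U) auto
lemma ere2: "ereal c \<le> ereal x - L \<Longrightarrow> L \<le> ereal (x - c)"
  by (cases L) auto

lemma feas_step:
  fixes z :: "real^'n::finite"
  assumes fz: "feasible l u b z" and a0: "0 \<le> a"
    and ab: "ereal a \<le> alpha_bar l u z p j g"
  shows "feasible l u b (z + a *\<^sub>R (g *\<^sub>R (axis p 1 - axis j 1)))"
proof -
  have bnd: "l h \<le> ereal (z$h) \<and> ereal (z$h) \<le> u h" for h using fz unfolding feasible_def by auto
  have sb: "(\<Sum>h\<in>UNIV. z$h) = b" using fz unfolding feasible_def by auto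
  have comp: "l h \<le> ereal (z$h + (if h = p then a*g else 0) - (if h = j then a*g else 0))
     \<and> ereal (z$h + (if h = p then a*g else 0) - (if h = j then a*g else 0)) \<le> u h" for h
  proof (cases "h = p \<and> h = j")
    case True then show ?thesis using bnd[of h] by auto
  next
    case nd: False
    consider "g > 0" | "g < 0" | "g = 0" by linarith
    then show ?thesis
    proof cases
      case 1
      have "ereal a \<le> min (u p - ereal (z$p)) (ereal (z$j) - l j) / ereal g"
        using ab 1 by (simp add: alpha_bar_def)
      then have "ereal (a*g) \<le> min (u p - ereal (z$p)) (ereal (z$j) - l j)"
        using a0 ereal_mul_le[of g a] 1 by blast
      then have A1: "ereal (z$p + a*g) \<le> u p" and A2: "l j \<le> ereal (z$j - a*g)"
        using ere1 ere2 by auto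
      have "0 \<le> a*g" using 1 a0 by simp
      then show ?thesis using nd bnd[of h] A1 A2
        apply (cases "h = p") apply simp_all
        apply (meson ereal_less_eq(3) order_trans le_add_same_cancel1)
        apply (cases "h = j") apply simp_all
        by (smt (verit, best) ereal_less_eq(3) order_trans)
    next
      case 2
      have "ereal a \<le> min (ereal (z$p) - l p) (u j - ereal (z$j)) / ereal \<bar>g\<bar>"
        using ab 2 by (simp add: alpha_bar_def)
      then have "ereal (a*\<bar>g\<bar>) \<le> min (ereal (z$p) - l p) (u j - ereal (z$j))"
        using a0 ereal_mul_le[of "\<bar>g\<bar>" a] 2 zero_less_abs_iff[of g] by (metis less_irrefl)
      then have A1: "ereal (z$j + a*\<bar>g\<bar>) \<le> u j" and A2: "l p \<le> ereal (z$p - a*\<bar>g\<bar>)"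
        using ere1 ere2 by auto
      have "0 \<le> a*\<bar>g\<bar>" "a*\<bar>g\<bar> = - (a*g)" using 2 a0 by (auto simp: mult_nonneg_nonpos)
      then show ?thesis using nd bnd[of h] A1 A2
        apply (cases "h = p") apply simp_all
        apply (smt (verit, best) ereal_less_eq(3) order_trans)
        apply (cases "h = j") apply simp_all
        by (smt (verit, best) ereal_less_eq(3) order_trans)
    next
      case 3 then show ?thesis using bnd[of h] by auto
    qed
  qed
  show ?thesis unfolding feasible_def sum_step comp_step using sb comp by blast
qed

lemma ab_nonneg:
  fixes z :: "real^'n::finite"
  assumes fz: "feasible l u b z" and lb: "\<forall>i. l i \<noteq> \<infinity>" and ub: "\<forall>i. u i \<noteq> -\<infinity>"
  shows "0 \<le> alpha_bar l u z p j g"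
proof -
  have bnd: "l h \<le> ereal (z$h) \<and> ereal (z$h) \<le> u h" for h using fz unfolding feasible_def by auto
  have d1: "0 \<le> U - ereal x" if "ereal x \<le> U" for U x using that by (cases U) auto
  have d2: "0 \<le> ereal x - L" if "L \<le> ereal x" for L x using that by (cases L) auto
  have m: "0 \<le> min (u p - ereal (z$p)) (ereal (z$j) - l j)" "0 \<le> min (ereal (z$p) - l p) (u j - ereal (z$j))"
    using d1 d2 bnd by auto
  have dv: "0 \<le> M / ereal c" if "0 \<le> M" "0 < c" for M c
    using that by (cases M) auto
  show ?thesis unfolding alpha_bar_def using m dv by auto
qed


lemma inner_iter:
  fixes zz :: "real^'n::finite"
  assumes fz: "feasible l u b zz" and lb: "\<forall>i. l i \<noteq> \<infinity>" and ub: "\<forall>i. u i \<noteq> -\<infinity>"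
    and Al: "0 < Al" and AA: "AA \<in> {Al..Au}" and dl: "0 < \<delta>" "\<delta> < 1" and gm: "0 < \<gamma>"
    and gdef: "g = grad zz $ j - grad zz $ p"
    and ddef: "d = g *\<^sub>R (axis p 1 - axis j 1)"
    and Ddef: "\<Delta> = real_of_ereal (min (alpha_bar l u zz p j g) (ereal AA))"
    and adef: "a = \<Delta> * \<delta> ^ m"
    and arm: "armijo f grad \<gamma> zz d a"
    and z': "z' = zz + a *\<^sub>R d"
  shows "feasible l u b z' \<and> f z' \<le> f zz"
proof -
  have ab: "0 \<le> alpha_bar l u zz p j g" using ab_nonneg[OF fz lb ub] .
  define M where "M = min (alpha_bar l u zz p j g) (ereal AA)"
  have M0: "0 \<le> M" "M \<le> ereal AA" using ab AA Al unfolding M_def by auto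
  then have MD: "M = ereal \<Delta>" unfolding Ddef M_def[symmetric] by (cases M) auto
  have D0: "0 \<le> \<Delta>" using M0 MD by auto
  have "\<delta> ^ m \<le> 1" using dl by (simp add: power_le_one)
  then have a0: "0 \<le> a" "a \<le> \<Delta>" using D0 dl unfolding adef
    by (auto simp: mult_left_le)
  have "ereal a \<le> alpha_bar l u zz p j g"
    using a0 MD unfolding M_def by (metis ereal_less_eq(3) min.bounded_iff order_trans)
  then have F: "feasible l u b z'" using feas_step[OF fz a0(1)] unfolding z' ddef by blast
  have "grad zz \<bullet> d = - (g * g)" unfolding ddef gdef by (rule inner_step)
  then have "f z' \<le> f zz - \<gamma> * a * (g * g)" using arm unfolding armijo_def z' by simp
  moreover have "0 \<le> \<gamma> * a * (g * g)" using gm a0 by simp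
  ultimately show ?thesis using F by linarith
qed

lemma dh_lower:
  assumes "L \<noteq> \<infinity>" "U \<noteq> -\<infinity>" "\<bar>a - b\<bar> \<le> e"
    "ereal r \<le> min (ereal b - L) (U - ereal b)"
  shows "ereal (r - e) \<le> min (ereal a - L) (U - ereal a)"
  using assms by (cases L; cases U) auto

lemma dh_active:
  assumes "ereal b = L \<or> ereal b = U"
  shows "min (ereal a - L) (U - ereal a) \<le> ereal \<bar>a - b\<bar>"
  using assms by (auto simp: min_le_iff_disj)

theorem proposition1:
  fixes f :: "real^'n::finite \<Rightarrow> real"
    and grad :: "real^'n \<Rightarrow> real^'n"
    and l u :: "'n \<Rightarrow> ereal" and b :: real
    and \<tau> \<gamma> \<delta> Al Au :: real
    and x :: "nat \<Rightarrow> real^'n" and j :: "nat \<Rightarrow> 'n" and p :: "nat \<Rightarrow> nat \<Rightarrow> 'n"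
    and z :: "nat \<Rightarrow> nat \<Rightarrow> real^'n" and A \<alpha> :: "nat \<Rightarrow> nat \<Rightarrow> real"
    and xstar :: "real^'n"
  assumes n2: "CARD('n) \<ge> 2"
    and lbound: "\<forall>i. l i \<noteq> \<infinity>" and ubound: "\<forall>i. u i \<noteq> -\<infinity>"
    and lu: "\<forall>i. l i < u i"
    and grad: "\<forall>y. (f has_derivative (\<lambda>h. grad y \<bullet> h)) (at y)"
    and grad_cont: "continuous_on UNIV grad"
    and grad_lip: "\<exists>L. \<forall>y y'. norm (grad y - grad y') \<le> L * norm (y - y')"
    and tau: "0 < \<tau>" "\<tau> \<le> 1"
    and gamma: "0 < \<gamma>" "\<gamma> < 1"
    and delta: "0 < \<delta>" "\<delta> < 1"
    and Abds: "0 < Al" "Al \<le> Au"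
    and x0: "feasible l u b (x 0)"
    and L0_ne: "{y. feasible l u b y \<and> f y \<le> f (x 0)} \<noteq> {}"
    and L0_compact: "compact {y. feasible l u b y \<and> f y \<le> f (x 0)}"
    and L0_interior: "\<forall>y\<in>{y. feasible l u b y \<and> f y \<le> f (x 0)}. \<exists>i. l i < ereal (y$i) \<and> ereal (y$i) < u i"
    and run: "ac2cd_run f grad l u \<tau> \<gamma> \<delta> Al Au x j p z A \<alpha>"
    and lim: "x \<longlonglongrightarrow> xstar"
  shows "Dmax l u xstar > 0 \<and>
    (\<forall>k \<ge> (LEAST k0. \<forall>k\<ge>k0. ereal (norm_inf (x k - xstar)) < ereal (\<tau> / (\<tau> + 1)) * Dmax l u xstar).
       j k \<notin> active_set l u xstar)"
proof -
  let ?L0 = "{y. feasible l u b y \<and> f y \<le> f (x 0)}"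
  let ?n = "CARD('n)"
  have R: "\<And>k. Dh l u (x k) (j k) \<ge> ereal \<tau> * Dmax l u (x k)
     \<and> z k 1 = x k \<and> x (Suc k) = z k (?n + 1)
     \<and> (\<forall>i\<in>{1..?n}.
          let g = grad (z k i) $ (j k) - grad (z k i) $ (p k i);
              d = g *\<^sub>R (axis (p k i) 1 - axis (j k) 1);
              \<Delta> = real_of_ereal (min (alpha_bar l u (z k i) (p k i) (j k) g) (ereal (A k i)))
          in A k i \<in> {Al..Au}
           \<and> (\<exists>m::nat. \<alpha> k i = \<Delta> * \<delta> ^ m \<and> armijo f grad \<gamma> (z k i) d (\<alpha> k i)
                 \<and> (\<forall>m'<m. \<not> armijo f grad \<gamma> (z k i) d (\<Delta> * \<delta> ^ m')))
           \<and> z k (i + 1) = z k i + \<alpha> k i *\<^sub>R d)"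
    using run unfolding ac2cd_run_def by blast
  have stepk: "feasible l u b (x (Suc k)) \<and> f (x (Suc k)) \<le> f (x k)" if fk: "feasible l u b (x k)" for k
  proof -
    have "\<forall>i. i \<le> ?n \<longrightarrow> feasible l u b (z k (Suc i)) \<and> f (z k (Suc i)) \<le> f (x k)"
    proof
      fix i show "i \<le> ?n \<longrightarrow> feasible l u b (z k (Suc i)) \<and> f (z k (Suc i)) \<le> f (x k)"
      proof (induction i)
        case 0 then show ?case using R[of k] fk by simp
      next
        case (Suc i)
        show ?case
        proof
          assume si: "Suc i \<le> ?n"
          then have IH: "feasible l u b (z k (Suc i)) \<and> f (z k (Suc i)) \<le> f (x k)" using Suc by simp
          have "Suc i \<in> {1..?n}" using si by simp
          then have C: "let g = grad (z k (Suc i)) $ (j k) - grad (z k (Suc i)) $ (p k (Suc i));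
              d = g *\<^sub>R (axis (p k (Suc i)) 1 - axis (j k) 1);
              \<Delta> = real_of_ereal (min (alpha_bar l u (z k (Suc i)) (p k (Suc i)) (j k) g) (ereal (A k (Suc i))))
          in A k (Suc i) \<in> {Al..Au}
           \<and> (\<exists>m::nat. \<alpha> k (Suc i) = \<Delta> * \<delta> ^ m \<and> armijo f grad \<gamma> (z k (Suc i)) d (\<alpha> k (Suc i)))
           \<and> z k (Suc i + 1) = z k (Suc i) + \<alpha> k (Suc i) *\<^sub>R d"
            using R[of k] unfolding Let_def by blast
          define g where "g = grad (z k (Suc i)) $ (j k) - grad (z k (Suc i)) $ (p k (Suc i))"
          define d :: "real^'n" where "d = g *\<^sub>R (axis (p k (Suc i)) 1 - axis (j k) 1)"
          define D where "D = real_of_ereal (min (alpha_bar l u (z k (Suc i)) (p k (Suc i)) (j k) g) (ereal (A k (Suc i))))"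
          from C obtain m where Am: "A k (Suc i) \<in> {Al..Au}" "\<alpha> k (Suc i) = D * \<delta> ^ m"
            "armijo f grad \<gamma> (z k (Suc i)) d (\<alpha> k (Suc i))" "z k (Suc i + 1) = z k (Suc i) + \<alpha> k (Suc i) *\<^sub>R d"
            unfolding Let_def g_def[symmetric] d_def[symmetric] D_def[symmetric] by blast
          have "feasible l u b (z k (Suc i + 1)) \<and> f (z k (Suc i + 1)) \<le> f (z k (Suc i))"
            by (rule inner_iter[OF _ lbound ubound Abds(1) Am(1) delta gamma(1) g_def d_def D_def Am(2) Am(3) Am(4)])
               (use IH in blast)
          then show "feasible l u b (z k (Suc (Suc i))) \<and> f (z k (Suc (Suc i))) \<le> f (x k)" using IH by simp
        qed
      qed
    qed
    then show ?thesis using R[of k] by simp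
  qed
  have inv: "feasible l u b (x k) \<and> f (x k) \<le> f (x 0)" for k
  proof (induction k)
    case 0 then show ?case using x0 by simp
  next
    case (Suc k) then show ?case using stepk[of k] by auto
  qed
  have "xstar \<in> ?L0"
    by (rule closed_sequentially[OF compact_imp_closed[OF L0_compact] _ lim]) (use inv in auto)
  then obtain i0 where i0: "l i0 < ereal (xstar$i0)" "ereal (xstar$i0) < u i0" using L0_interior by blast
  have "0 < ereal (xstar$i0) - l i0" using i0(1) lbound by (cases "l i0") auto
  moreover have "0 < u i0 - ereal (xstar$i0)" using i0(2) ubound by (cases "u i0") auto
  ultimately have "0 < Dh l u xstar i0" unfolding Dh_def by simp
  moreover have "Dh l u xstar i0 \<le> Dmax l u xstar" unfolding Dmax_def by (rule Max_ge) auto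
  ultimately have Dpos: "0 < Dmax l u xstar" by simp
  obtain istar where Dstar: "Dh l u xstar istar = Dmax l u xstar"
    unfolding Dmax_def using Max_in[of "range (\<lambda>h. Dh l u xstar h)"] by (metis UNIV_not_empty empty_is_image finite finite_imageI imageE)
  have DmaxGe: "Dh l u y h \<le> Dmax l u y" for y h unfolding Dmax_def by (rule Max_ge) auto
  have lj: "l (j k) \<noteq> \<infinity>" "u (j k) \<noteq> -\<infinity>" for k using lbound ubound by auto
  have Rk: "ereal \<tau> * Dmax l u (x k) \<le> Dh l u (x k) (j k)" for k using R[of k] by blast
  show ?thesis
  proof (cases "Dmax l u xstar = \<infinity>")
    case True
    have inf_iff: "min (ereal a - L) (U - ereal a) = \<infinity> \<longleftrightarrow> L = -\<infinity> \<and> U = \<infinity>" for a L U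
      by (cases L; cases U) (auto simp: min_def)
    have "l istar = -\<infinity> \<and> u istar = \<infinity>" using Dstar True inf_iff unfolding Dh_def by metis
    then have "Dh l u (x k) istar = \<infinity>" for k unfolding Dh_def by simp
    then have "Dmax l u (x k) = \<infinity>" for k using DmaxGe[of "x k" istar] by simp
    then have "Dh l u (x k) (j k) = \<infinity>" for k using Rk[of k] tau(1) by simp
    then have "l (j k) = -\<infinity> \<and> u (j k) = \<infinity>" for k using inf_iff unfolding Dh_def by metis
    then have "j k \<notin> active_set l u xstar" for k unfolding active_set_def by auto
    then show ?thesis using Dpos by blast
  next
    case False
    then obtain dd where dd: "Dmax l u xstar = ereal dd" using Dpos by (cases "Dmax l u xstar") auto
    have dd0: "0 < dd" using Dpos dd by simp
    define c where "c = \<tau> / (\<tau> + 1) * dd"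
    have c0: "0 < c" unfolding c_def using tau dd0 by simp
    have hc: "ereal (\<tau> / (\<tau> + 1)) * Dmax l u xstar = ereal c" unfolding c_def dd by simp
    have ni: "norm_inf v \<le> norm v" for v :: "real^'n"
      unfolding norm_inf_def by (auto simp: component_le_norm_cart)
    obtain k0 where "\<forall>k\<ge>k0. norm (x k - xstar) < c" using LIMSEQ_D[OF lim c0] by blast
    then have ex: "\<forall>k\<ge>k0. ereal (norm_inf (x k - xstar)) < ereal c" proof (intro allI impI)
      fix k assume "k0 \<le> k"
      then have "norm (x k - xstar) < c" using \<open>\<forall>k\<ge>k0. norm (x k - xstar) < c\<close> by blast
      then show "ereal (norm_inf (x k - xstar)) < ereal c" using ni[of "x k - xstar"] by simp
    qed
    have main: "j k \<notin> active_set l u xstar" if ek: "ereal (norm_inf (x k - xstar)) < ereal c" for k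
    proof
      assume act: "j k \<in> active_set l u xstar"
      define e where "e = norm_inf (x k - xstar)"
      have ec: "e < c" using ek unfolding e_def by simp
      have comp: "\<bar>x k $ i - xstar $ i\<bar> \<le> e" for i
        unfolding e_def norm_inf_def by (rule Max_ge[of _ "\<bar>(x k - xstar) $ i\<bar>", simplified]) auto
      have "ereal (dd - e) \<le> Dh l u (x k) istar"
      proof -
        have "ereal dd \<le> min (ereal (xstar $ istar) - l istar) (u istar - ereal (xstar $ istar))"
          using Dstar dd unfolding Dh_def by simp
        then show ?thesis unfolding Dh_def
          using dh_lower[of "l istar" "u istar" "x k $ istar" "xstar $ istar" e dd] lbound ubound comp by blast
      qed
      then have "ereal (dd - e) \<le> Dmax l u (x k)" using DmaxGe[of "x k" istar] by simp
      then have "ereal \<tau> * ereal (dd - e) \<le> ereal \<tau> * Dmax l u (x k)"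
        using tau by (intro ereal_mult_left_mono) auto
      then have A1: "ereal (\<tau> * (dd - e)) \<le> Dh l u (x k) (j k)" using Rk[of k] by simp
      have "Dh l u (x k) (j k) \<le> ereal \<bar>x k $ j k - xstar $ j k\<bar>"
        unfolding Dh_def by (rule dh_active) (use act in \<open>auto simp: active_set_def\<close>)
      then have "\<tau> * (dd - e) \<le> e" using A1 comp[of "j k"] by (meson ereal_less_eq(3) order_trans)
      moreover have "\<tau> * (dd - e) > \<tau> * (dd - c)" using tau ec by simp
      moreover have "\<tau> * (dd - c) = c" unfolding c_def using tau by (simp add: field_simps)
      ultimately show False using ec by linarith
    qed
    have "\<forall>k\<ge>(LEAST k0. \<forall>k\<ge>k0. ereal (norm_inf (x k - xstar)) < ereal c). ereal (norm_inf (x k - xstar)) < ereal c"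
      by (rule LeastI_ex) (use ex in blast)
    then show ?thesis unfolding hc using Dpos main by blast
  qed
qed

end
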